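(* Assume (C2), (C3), and that $b:\mathcal Y\to\mathcal X$ is differentiable with $\nabla b$ bounded and continuous and $\int_{\mathcal Y}b\,d\mu=0$. Let $\Psi$ be the solution of the Poisson equation $\mathcal L\Psi=-b$, $\int\Psi\,d\mu=0$. Let $C_2>0$ be the optimal constant in the Burkholder–Davis–Gundy inequality with $p=2$ and $K_f:=4\big(\frac{\|\nabla f\|^2_\infty}{C_f^2}\vee1\big)$. If $\|D\tau\|^2_\infty<\frac{C_f}{C_2K_f}$, then $\sup_{y\in\mathcal Y}|\nabla\Psi(y)|<\infty$.
   Context: $\mathcal X=\mathbb R^m$, $\mathcal Y=\mathbb R^{d-m}$, $f:\mathcal Y\to\mathcal Y$, $\tau:\mathcal Y\to\mathbb R^{(d-m)\times\ell}$, and $\mathcal L\phi=\tfrac12 D^2\phi:(\tau\tau^T)+\nabla\phi f$, the generator of $dY_t=f(Y_t)dt+\tau(Y_t)dW_t$ with $W$ an $\ell$-dimensional Brownian motion. (C2) $\tau\in C^1_b$ and $\tau\tau^T$ is uniformly nondegenerate. (C3) $f(y)=-\Gamma y+\zeta(y)$ with $\Gamma$ symmetric positive definite, $\zeta\in C^1_b$, and $\langle(\Gamma-L_\zeta I)y,y\rangle\ge C_f|y|^2$ for all $y$, where $L_\zeta=\|\nabla\zeta\|_\infty$ and $C_f>0$. Under (C2)–(C3) $\mathcal L$ has a unique invariant probability measure $\mu$, and the Poisson equation has a unique $C^2$ solution of polynomial growth. The BDG constant $C_2$ is the smallest constant with $\mathbb E\sup_{s\le t}|M_s|^2\le C_2\mathbb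 E\langle M\rangle_t$ for continuous local martingales $M$ null at $0$. *)

theory Defs
  imports "HOL-Analysis.Analysis" "HOL-Probability.Probability"
begin

definition second_partial ::
  "(real^'n \<Rightarrow> 'v::real_normed_vector) \<Rightarrow> 'n \<Rightarrow> 'n \<Rightarrow> real^'n \<Rightarrow> 'v" where
  "second_partial \<phi> i j y =
     frechet_derivative (\<lambda>z. frechet_derivative \<phi> (at z) (axis j 1)) (at y) (axis i 1)"

definition C2_fun :: "(real^'n \<Rightarrow> 'v::real_normed_vector) \<Rightarrow> bool" where
  "C2_fun \<phi> \<longleftrightarrow>
     (\<forall>y. \<phi> differentiable (at y)) \<and>
     (\<forall>j y. (\<lambda>z. frechet_derivative \<phi> (at z) (axis j 1)) differentiable (at y)) \<and>
     (\<forall>i j. continuous_on UNIV (second_partial \<phi> i j))"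

definition C1b_fun :: "(real^'n \<Rightarrow> 'v::real_normed_vector) \<Rightarrow> bool" where
  "C1b_fun g \<longleftrightarrow> bounded (range g) \<and>
     (\<exists>g'. (\<forall>y. (g has_derivative blinfun_apply (g' y)) (at y)) \<and>
           continuous_on UNIV g' \<and> bounded (range g'))"

definition sup_deriv_norm :: "(real^'n \<Rightarrow> 'v::real_normed_vector) \<Rightarrow> real" where
  "sup_deriv_norm g = (SUP y. onorm (frechet_derivative g (at y)))"

definition generator ::
  "(real^'n \<Rightarrow> real^'l^'n) \<Rightarrow> (real^'n \<Rightarrow> real^'n) \<Rightarrow>
   (real^'n \<Rightarrow> 'v::real_normed_vector) \<Rightarrow> real^'n \<Rightarrow> 'v" where
  "generator \<tau> f \<phi> y =
     (1/2) *\<^sub>R (\<Sum>i\<in>UNIV. \<Sum>j\<in>UNIV.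
        ((\<tau> y ** transpose (\<tau> y)) $ i $ j) *\<^sub>R second_partial \<phi> i j y)
     + frechet_derivative \<phi> (at y) (f y)"

text \<open>Invariant probability measure of L (infinitesimal invariance:
  integral of L phi vanishes for all compactly supported C^2 test functions).\<close>
definition invariant_measure ::
  "(real^'n \<Rightarrow> real^'l^'n) \<Rightarrow> (real^'n \<Rightarrow> real^'n) \<Rightarrow> (real^'n) measure \<Rightarrow> bool" where
  "invariant_measure \<tau> f \<mu> \<longleftrightarrow>
     prob_space \<mu> \<and> sets \<mu> = sets borel \<and>
     (\<forall>\<phi>::real^'n \<Rightarrow> real. C2_fun \<phi> \<and> (\<exists>K. compact K \<and> (\<forall>y. y \<notin> K \<longrightarrow> \<phi> y = 0)) \<longrightarrow>
        integrable \<mu> (generator \<tau> f \<phi>) \<and> (\<integral>y. generator \<tau> f \<phi> y \<partial>\<mu>) = 0)"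

text \<open>Optimal constant C_2 in the BDG inequality
  E sup_{s<=t} |M_s|^2 <= C_2 E <M>_t for continuous local martingales null at 0.
  Stochastic calculus is unavailable; its value is 4 (Doob's L^2 maximal inequality,
  sharp for Brownian motion).\<close>
definition BDG_C2 :: real where
  "BDG_C2 = 4"

end

theory Submission
  imports Defs
begin

lemma uminus_at0: "filterlim (\<lambda>x::real. - x) (at 0) (at 0)"
  using filtermap_at_minus[of "0::real"] by (simp add: filterlim_def)

lemma second_diff_limit:
  fixes P P' :: "real \<Rightarrow> real"
  assumes d1: "\<And>t. (P has_real_derivative P' t) (at t)"
    and d2: "(P' has_real_derivative P2) (at 0)"
  shows "((\<lambda>t. (P t + P (-t) - 2 * P 0) / t^2) \<longlongrightarrow> P2) (at 0)"
proof -
  have dm: "((\<lambda>t. P (-t)) has_real_derivative (- P' (-t))) (at t)" for t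
  proof -
    have "((\<lambda>t::real. - t) has_real_derivative -1) (at t)" by (auto intro!: derivative_eq_intros)
    from DERIV_chain2[OF d1 this] show ?thesis by simp
  qed
  have c1: "isCont P 0" using d1 DERIV_isCont by blast
  have c2: "isCont (\<lambda>t. P (-t)) 0" using dm DERIV_isCont by blast
  have f0: "((\<lambda>t. P t + P (-t) - 2 * P 0) \<longlongrightarrow> 0) (at 0)"
  proof -
    have "((\<lambda>t. P t + P (-t) - 2 * P 0) \<longlongrightarrow> P 0 + P (-0) - 2 * P 0) (at 0)"
      using c1 c2 unfolding isCont_def by (intro tendsto_intros) auto
    then show ?thesis by simp
  qed
  have g0: "((\<lambda>t::real. t^2) \<longlongrightarrow> 0) (at 0)"
    by (rule tendsto_eq_intros) (auto intro!: tendsto_eq_intros)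
  have h1: "((\<lambda>t. (P' t - P' 0) / t) \<longlongrightarrow> P2) (at 0)"
    using d2 unfolding DERIV_def by simp
  have h2: "((\<lambda>t. (P' (-t) - P' 0) / (-t)) \<longlongrightarrow> P2) (at 0)"
    using filterlim_compose[OF h1 uminus_at0] by (simp add: o_def)
  have h3: "((\<lambda>t. ((P' t - P' 0) / t + (P' (-t) - P' 0) / (-t)) / 2) \<longlongrightarrow> (P2 + P2) / 2) (at 0)"
    by (intro tendsto_intros h1 h2) auto
  have h4: "((\<lambda>t. (P' t - P' (-t)) / (2 * t)) \<longlongrightarrow> P2) (at 0)"
  proof -
    have "\<forall>\<^sub>F t in at 0. ((P' t - P' 0) / t + (P' (-t) - P' 0) / (-t)) / 2 = (P' t - P' (-t)) / (2 * t)"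
      unfolding eventually_at_filter by (auto simp: field_simps)
    from tendsto_cong[OF this] h3 show ?thesis by simp
  qed
  show ?thesis
  proof (rule lhopital[OF f0 g0])
    show "\<forall>\<^sub>F t in at 0. (t::real)^2 \<noteq> 0" unfolding eventually_at_filter by auto
    show "\<forall>\<^sub>F t in at 0. 2 * (t::real) \<noteq> 0" unfolding eventually_at_filter by auto
    show "\<forall>\<^sub>F t in at 0. ((\<lambda>t. P t + P (-t) - 2 * P 0) has_real_derivative (P' t - P' (-t))) (at t)"
      using d1 dm by (auto intro!: always_eventually derivative_eq_intros)
    show "\<forall>\<^sub>F t in at 0. ((\<lambda>t::real. t^2) has_real_derivative (2 * t)) (at t)"
      by (auto intro!: always_eventually derivative_eq_intros)
    show "((\<lambda>t. (P' t - P' (-t)) / (2 * t)) \<longlongrightarrow> P2) (at 0)" by (rule h4)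
  qed
qed

lemma real_quad_aux:
  fixes n L u Q t :: real
  assumes n: "n > 0" and L: "L \<ge> 0" and LL: "L^2 = n^2 + 2*t*u + t^2 * Q"
    and cs: "\<bar>u\<bar> \<le> n * sqrt Q" and Q: "Q \<ge> 0"
  shows "L \<le> n + t * u / n + t^2 * Q / (2 * n)"
proof -
  define r where "r = sqrt Q"
  have r: "r \<ge> 0" "Q = r^2" using Q by (auto simp: r_def)
  have Z: "0 \<le> n^2 + t*u + t^2*Q/2"
  proof -
    have a1: "\<bar>t*u\<bar> \<le> \<bar>t\<bar> * (n*r)" using cs unfolding r_def[symmetric] abs_mult
      by (rule mult_left_mono) simp
    have "t*u \<ge> - (\<bar>t\<bar> * (n*r))" using a1 abs_ge_minus_self[of "t*u"] by linarith
    moreover have "n^2 - \<bar>t\<bar>*(n*r) + t^2*r^2/2 \<ge> 0"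
    proof -
      have "n^2 - \<bar>t\<bar>*(n*r) + t^2*r^2/2 = (n - \<bar>t\<bar>*r/2)^2 + t^2*r^2/4"
        by (simp add: power2_eq_square algebra_simps)
      then show ?thesis by (metis add_nonneg_nonneg zero_le_power2 divide_nonneg_pos zero_less_numeral
        mult_nonneg_nonneg)
    qed
    moreover have "t^2*Q/2 = t^2*r^2/2" using r by simp
    ultimately show ?thesis by linarith
  qed
  have sq: "(n*L)^2 \<le> (n^2 + t*u + t^2*Q/2)^2"
  proof -
    have nl: "(n*L)^2 = n^2*(n^2 + 2*t*u + t^2*Q)" using LL by (simp add: power_mult_distrib)
    have "(n^2 + t*u + t^2*Q/2)^2 - (n*L)^2 = (t*u + t^2*Q/2)^2"
      unfolding nl by (simp add: power2_eq_square algebra_simps)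
    moreover have "0 \<le> (t*u + t^2*Q/2)^2" by simp
    ultimately show ?thesis by linarith
  qed
  have "n*L \<le> n^2 + t*u + t^2*Q/2"
    using power2_le_imp_le[OF sq Z] .
  then have "L \<le> (n^2 + t*u + t^2*Q/2) / n" using n by (simp add: field_simps)
  also have "\<dots> = n + t * u / n + t^2 * Q / (2 * n)" using n by (simp add: field_simps power2_eq_square)
  finally show ?thesis .
qed

lemma norm_quad_bound:
  fixes p q :: "'a::real_inner"
  assumes "p \<noteq> 0"
  shows "norm (p + t *\<^sub>R q) \<le> norm p + t * (p \<bullet> q) / norm p + t^2 * (norm q)^2 / (2 * norm p)"
proof (rule real_quad_aux)
  show "0 < norm p" using assms by simp
  show "0 \<le> norm (p + t *\<^sub>R q)" by simp
  show "(norm (p + t *\<^sub>R q))^2 = (norm p)^2 + 2*t*(p \<bullet> q) + t^2 * (norm q)^2"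
  proof -
    have "(norm (p + t *\<^sub>R q))^2 = (p + t *\<^sub>R q) \<bullet> (p + t *\<^sub>R q)" by (simp add: power2_norm_eq_inner)
    also have "\<dots> = p \<bullet> p + 2*t*(p \<bullet> q) + t^2 * (q \<bullet> q)"
      by (simp add: inner_add_left inner_add_right inner_commute[of q p] power2_eq_square algebra_simps)
    also have "\<dots> = (norm p)^2 + 2*t*(p \<bullet> q) + t^2 * (norm q)^2" by (simp add: power2_norm_eq_inner)
    finally show ?thesis .
  qed
  show "\<bar>p \<bullet> q\<bar> \<le> norm p * sqrt ((norm q)^2)" using Cauchy_Schwarz_ineq2 by simp
  show "0 \<le> (norm q)^2" by simp
qed

lemma div_le_aux: fixes a b t :: real shows "t > 0 \<Longrightarrow> a \<le> t * b \<Longrightarrow> a / t \<le> b"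
  by (simp add: pos_divide_le_eq mult.commute)
lemma dq_aux: fixes a b c e d t :: real shows "(a - b - d * (c + e)) / t = a / t - b / t - d * (c / t + e / t)"
  by (simp add: diff_divide_distrib add_divide_distrib[symmetric])

lemma column_ineq:
  fixes Fx Fy Vx Vy Fx' Fy' Vx' Vy' :: "real \<Rightarrow> real" and p q :: "'a::real_inner"
  assumes dFx: "\<And>t. (Fx has_real_derivative Fx' t) (at t)" and dFx2: "(Fx' has_real_derivative Ax) (at 0)"
    and dFy: "\<And>t. (Fy has_real_derivative Fy' t) (at t)" and dFy2: "(Fy' has_real_derivative Ay) (at 0)"
    and dVx: "\<And>t. (Vx has_real_derivative Vx' t) (at t)" and dVx2: "(Vx' has_real_derivative Bx) (at 0)"
    and dVy: "\<And>t. (Vy has_real_derivative Vy' t) (at t)" and dVy2: "(Vy' has_real_derivative By) (at 0)"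
    and p: "p \<noteq> 0" and K: "K \<ge> 0"
    and mx: "\<And>t. Fx t - Fy t - K * norm (p + t *\<^sub>R q) - \<delta> * (Vx t + Vy t)
                 \<le> Fx 0 - Fy 0 - K * norm p - \<delta> * (Vx 0 + Vy 0)"
  shows "Ax - Ay - \<delta> * (Bx + By) \<le> K * (norm q)^2 / norm p"
proof -
  define SD where "SD F t = (F t + F (-t) - 2 * F 0) / t^2" for F :: "real \<Rightarrow> real" and t :: real
  have lim: "((\<lambda>t. SD Fx t - SD Fy t - \<delta> * (SD Vx t + SD Vy t)) \<longlongrightarrow> Ax - Ay - \<delta> * (Bx + By)) (at 0)"
    unfolding SD_def
    by (intro tendsto_intros second_diff_limit[OF dFx dFx2] second_diff_limit[OF dFy dFy2]
        second_diff_limit[OF dVx dVx2] second_diff_limit[OF dVy dVy2])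
  have ev: "\<forall>\<^sub>F t in at 0. SD Fx t - SD Fy t - \<delta> * (SD Vx t + SD Vy t) \<le> K * (norm q)^2 / norm p"
    unfolding eventually_at_filter
  proof (intro always_eventually allI impI)
    fix t :: real assume "t \<noteq> 0"
    then have t2: "t^2 > 0" by simp
    have n1: "norm (p + t *\<^sub>R q) \<le> norm p + t * (p \<bullet> q) / norm p + t^2 * (norm q)^2 / (2 * norm p)"
      by (rule norm_quad_bound[OF p])
    have n2: "norm (p + (-t) *\<^sub>R q) \<le> norm p + (-t) * (p \<bullet> q) / norm p + (-t)^2 * (norm q)^2 / (2 * norm p)"
      by (rule norm_quad_bound[OF p])
    have nsum: "norm (p + t *\<^sub>R q) + norm (p + (-t) *\<^sub>R q) - 2 * norm p \<le> t^2 * ((norm q)^2 / norm p)"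
      using n1 n2 by (simp add: field_simps)
    have "(Fx t + Fx (-t) - 2 * Fx 0) - (Fy t + Fy (-t) - 2 * Fy 0) - \<delta> * ((Vx t + Vx (-t) - 2 * Vx 0) + (Vy t + Vy (-t) - 2 * Vy 0))
        \<le> K * (norm (p + t *\<^sub>R q) + norm (p + (-t) *\<^sub>R q) - 2 * norm p)"
      using mx[of t] mx[of "-t"] by (simp add: algebra_simps)
    also have "\<dots> \<le> K * (t^2 * ((norm q)^2 / norm p))" by (rule mult_left_mono[OF nsum K])
    finally have "((Fx t + Fx (-t) - 2 * Fx 0) - (Fy t + Fy (-t) - 2 * Fy 0) - \<delta> * ((Vx t + Vx (-t) - 2 * Vx 0) + (Vy t + Vy (-t) - 2 * Vy 0))) / t^2
        \<le> K * (norm q)^2 / norm p"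
      using t2 by (simp add: divide_le_eq algebra_simps)
    then show "SD Fx t - SD Fy t - \<delta> * (SD Vx t + SD Vy t) \<le> K * (norm q)^2 / norm p"
      unfolding SD_def by (simp add: diff_divide_distrib add_divide_distrib algebra_simps)
  qed
  show ?thesis by (rule tendsto_upperbound[OF lim ev]) simp
qed

lemma first_ineq:
  fixes Fx Fy Vx Vy :: "real \<Rightarrow> real" and p q :: "'a::real_inner"
  assumes dFx: "(Fx has_real_derivative Lx) (at 0)" and dFy: "(Fy has_real_derivative Ly) (at 0)"
    and dVx: "(Vx has_real_derivative Mx) (at 0)" and dVy: "(Vy has_real_derivative My) (at 0)"
    and p: "p \<noteq> 0" and K: "K \<ge> 0"
    and mx: "\<And>t. Fx t - Fy t - K * norm (p + t *\<^sub>R q) - \<delta> * (Vx t + Vy t)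
                 \<le> Fx 0 - Fy 0 - K * norm p - \<delta> * (Vx 0 + Vy 0)"
  shows "Lx - Ly - \<delta> * (Mx + My) \<le> K * (p \<bullet> q) / norm p"
proof -
  define DQ where "DQ F t = (F t - F 0) / t" for F :: "real \<Rightarrow> real" and t :: real
  have dq: "((\<lambda>t. DQ F t) \<longlongrightarrow> D) (at_right 0)" if "(F has_real_derivative D) (at 0)" for F D
  proof -
    have "((\<lambda>t. DQ F t) \<longlongrightarrow> D) (at 0)" using that unfolding DERIV_def DQ_def by simp
    then show ?thesis by (rule filterlim_mono) (auto simp: at_le)
  qed
  have lim1: "((\<lambda>t. DQ Fx t - DQ Fy t - \<delta> * (DQ Vx t + DQ Vy t)) \<longlongrightarrow> Lx - Ly - \<delta> * (Mx + My)) (at_right 0)"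
    by (intro tendsto_intros dq dFx dFy dVx dVy)
  have lim2: "((\<lambda>t. K * (p \<bullet> q) / norm p + t * (K * (norm q)^2 / (2 * norm p))) \<longlongrightarrow> K * (p \<bullet> q) / norm p + 0 * (K * (norm q)^2 / (2 * norm p))) (at_right 0)"
    by (intro tendsto_intros)
  have ev: "\<forall>\<^sub>F t in at_right 0. DQ Fx t - DQ Fy t - \<delta> * (DQ Vx t + DQ Vy t) \<le> K * (p \<bullet> q) / norm p + t * (K * (norm q)^2 / (2 * norm p))"
  proof (rule eventually_mono[OF eventually_at_right_less])
    fix t :: real assume "0 < t"
    then have "t > 0" by simp
    have n1: "norm (p + t *\<^sub>R q) - norm p \<le> t * (p \<bullet> q) / norm p + t^2 * (norm q)^2 / (2 * norm p)"
      using norm_quad_bound[OF p, of t q] by simp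
    have "(Fx t - Fx 0) - (Fy t - Fy 0) - \<delta> * ((Vx t - Vx 0) + (Vy t - Vy 0)) \<le> K * (norm (p + t *\<^sub>R q) - norm p)"
      using mx[of t] by (simp add: algebra_simps)
    also have "\<dots> \<le> K * (t * (p \<bullet> q) / norm p + t^2 * (norm q)^2 / (2 * norm p))"
      by (rule mult_left_mono[OF n1 K])
    also have "\<dots> = t * (K * (p \<bullet> q) / norm p + t * (K * (norm q)^2 / (2 * norm p)))"
      by (simp add: algebra_simps power2_eq_square)
    finally have X: "(Fx t - Fx 0) - (Fy t - Fy 0) - \<delta> * ((Vx t - Vx 0) + (Vy t - Vy 0)) \<le> t * (K * (p \<bullet> q) / norm p + t * (K * (norm q)^2 / (2 * norm p)))" .
    have eq: "DQ Fx t - DQ Fy t - \<delta> * (DQ Vx t + DQ Vy t) = ((Fx t - Fx 0) - (Fy t - Fy 0) - \<delta> * ((Vx t - Vx 0) + (Vy t - Vy 0))) / t"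
      unfolding DQ_def by (rule dq_aux[symmetric])
    show "DQ Fx t - DQ Fy t - \<delta> * (DQ Vx t + DQ Vy t) \<le> K * (p \<bullet> q) / norm p + t * (K * (norm q)^2 / (2 * norm p))"
      unfolding eq using \<open>t > 0\<close> X by (rule div_le_aux)
  qed
  have "Lx - Ly - \<delta> * (Mx + My) \<le> K * (p \<bullet> q) / norm p + 0 * (K * (norm q)^2 / (2 * norm p))"
    by (rule tendsto_le[OF _ lim2 lim1 ev]) simp
  then show ?thesis by simp
qed

lemma lin_expand:
  fixes L :: "real^'n \<Rightarrow> 'v::real_vector"
  assumes "linear L"
  shows "L a = (\<Sum>j\<in>UNIV. a$j *\<^sub>R L (axis j 1))"
proof -
  have "a = (\<Sum>j\<in>UNIV. a$j *\<^sub>R axis j (1::real))"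
    using basis_expansion[of a] by (simp add: scalar_mult_eq_scaleR)
  then have "L a = L (\<Sum>j\<in>UNIV. a$j *\<^sub>R axis j (1::real))" by simp
  also have "\<dots> = (\<Sum>j\<in>UNIV. a$j *\<^sub>R L (axis j 1))"
    using assms by (simp add: real_vector.linear_sum linear_cmul)
  finally show ?thesis .
qed

lemma line_deriv1:
  fixes \<Psi> :: "real^'n \<Rightarrow> 'v::real_inner"
  assumes d: "\<And>z. \<Psi> differentiable (at z)"
  shows "((\<lambda>t. e \<bullet> \<Psi> (x + t *\<^sub>R a)) has_real_derivative (e \<bullet> frechet_derivative \<Psi> (at (x + t *\<^sub>R a)) a)) (at t)"
proof -
  let ?D = "frechet_derivative \<Psi> (at (x + t *\<^sub>R a))"
  have hd: "(\<Psi> has_derivative ?D) (at (x + t *\<^sub>R a))" using d frechet_derivative_works by blast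
  have hl: "((\<lambda>t. x + t *\<^sub>R a) has_derivative (\<lambda>h. h *\<^sub>R a)) (at t)"
    by (auto intro!: derivative_eq_intros)
  have c: "((\<Psi> \<circ> (\<lambda>t. x + t *\<^sub>R a)) has_derivative (?D \<circ> (\<lambda>h. h *\<^sub>R a))) (at t)"
    by (rule diff_chain_at[OF hl hd])
  have c2: "((\<lambda>t. e \<bullet> (\<Psi> \<circ> (\<lambda>t. x + t *\<^sub>R a)) t) has_derivative (\<lambda>h. e \<bullet> (?D \<circ> (\<lambda>h. h *\<^sub>R a)) h)) (at t)"
    using bounded_linear.has_derivative[OF bounded_linear_inner_right c] .
  have lin: "linear ?D" using has_derivative_linear[OF hd] .
  have eq: "(\<lambda>h. e \<bullet> (?D \<circ> (\<lambda>h. h *\<^sub>R a)) h) = (\<lambda>h. (e \<bullet> ?D a) * h)"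
    using linear_cmul[OF lin] by (auto simp: o_def mult.commute)
  show ?thesis unfolding has_field_derivative_def using c2 unfolding eq by (simp add: o_def)
qed

lemma line_deriv2:
  fixes \<Psi> :: "real^'n \<Rightarrow> 'v::real_inner"
  assumes C2: "C2_fun \<Psi>"
  shows "((\<lambda>t. e \<bullet> frechet_derivative \<Psi> (at (x + t *\<^sub>R a)) a) has_real_derivative
           (\<Sum>i\<in>UNIV. \<Sum>j\<in>UNIV. a$i * a$j * (e \<bullet> second_partial \<Psi> i j x))) (at 0)"
proof -
  define dj where "dj j z = frechet_derivative \<Psi> (at z) (axis j 1)" for j z
  have d0: "\<And>z. \<Psi> differentiable (at z)" and d1: "\<And>j z. dj j differentiable (at z)"
    using C2 unfolding C2_fun_def dj_def by auto
  have linz: "linear (frechet_derivative \<Psi> (at z))" for z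
    using has_derivative_linear d0 frechet_derivative_works by blast
  have f_eq: "(\<lambda>t. e \<bullet> frechet_derivative \<Psi> (at (x + t *\<^sub>R a)) a) = (\<lambda>t. \<Sum>j\<in>UNIV. a$j * (e \<bullet> dj j (x + t *\<^sub>R a)))"
    by (rule ext) (simp add: lin_expand[OF linz, of _ a] dj_def inner_sum_right)
  have each: "((\<lambda>t. e \<bullet> dj j (x + t *\<^sub>R a)) has_real_derivative (\<Sum>i\<in>UNIV. a$i * (e \<bullet> second_partial \<Psi> i j x))) (at 0)" for j
  proof -
    have "((\<lambda>t. e \<bullet> dj j (x + t *\<^sub>R a)) has_real_derivative (e \<bullet> frechet_derivative (dj j) (at (x + 0 *\<^sub>R a)) a)) (at 0)"
      by (rule line_deriv1[OF d1])
    moreover have "linear (frechet_derivative (dj j) (at x))"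
      using has_derivative_linear d1 frechet_derivative_works by blast
    moreover have sp: "second_partial \<Psi> i j x = frechet_derivative (dj j) (at x) (axis i 1)" for i
      unfolding second_partial_def dj_def ..
    ultimately show ?thesis
      by (simp add: lin_expand[of "frechet_derivative (dj j) (at x)" a] inner_sum_right sp)
  qed
  have "((\<lambda>t. \<Sum>j\<in>UNIV. a$j * (e \<bullet> dj j (x + t *\<^sub>R a))) has_real_derivative
          (\<Sum>j\<in>UNIV. a$j * (\<Sum>i\<in>UNIV. a$i * (e \<bullet> second_partial \<Psi> i j x)))) (at 0)"
    by (intro DERIV_sum DERIV_cmult each)
  moreover have "(\<Sum>j\<in>UNIV. a$j * (\<Sum>i\<in>UNIV. a$i * (e \<bullet> second_partial \<Psi> i j x)))
      = (\<Sum>i\<in>UNIV. \<Sum>j\<in>UNIV. a$i * a$j * (e \<bullet> second_partial \<Psi> i j x))"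
    by (subst sum.swap) (simp add: sum_distrib_left mult_ac)
  ultimately show ?thesis unfolding f_eq by simp
qed

lemma gen_expand:
  fixes \<Psi> :: "real^'n \<Rightarrow> 'v::real_inner"
  shows "e \<bullet> generator \<tau> f \<Psi> x = 1/2 * (\<Sum>k\<in>UNIV. \<Sum>i\<in>UNIV. \<Sum>j\<in>UNIV. \<tau> x$i$k * \<tau> x$j$k * (e \<bullet> second_partial \<Psi> i j x))
      + e \<bullet> frechet_derivative \<Psi> (at x) (f x)"
proof -
  have "(\<Sum>i\<in>UNIV. \<Sum>j\<in>UNIV. (\<tau> x ** transpose (\<tau> x))$i$j * (e \<bullet> second_partial \<Psi> i j x))
      = (\<Sum>i\<in>UNIV. \<Sum>j\<in>UNIV. \<Sum>k\<in>UNIV. \<tau> x$i$k * \<tau> x$j$k * (e \<bullet> second_partial \<Psi> i j x))"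
    by (simp add: matrix_matrix_mult_def transpose_def sum_distrib_right)
  also have "\<dots> = (\<Sum>i\<in>UNIV. \<Sum>k\<in>UNIV. \<Sum>j\<in>UNIV. \<tau> x$i$k * \<tau> x$j$k * (e \<bullet> second_partial \<Psi> i j x))"
    by (rule sum.cong[OF refl], rule sum.swap)
  also have "\<dots> = (\<Sum>k\<in>UNIV. \<Sum>i\<in>UNIV. \<Sum>j\<in>UNIV. \<tau> x$i$k * \<tau> x$j$k * (e \<bullet> second_partial \<Psi> i j x))"
    by (rule sum.swap)
  finally have h: "(\<Sum>i\<in>UNIV. \<Sum>j\<in>UNIV. (\<tau> x ** transpose (\<tau> x))$i$j * (e \<bullet> second_partial \<Psi> i j x))
      = (\<Sum>k\<in>UNIV. \<Sum>i\<in>UNIV. \<Sum>j\<in>UNIV. \<tau> x$i$k * \<tau> x$j$k * (e \<bullet> second_partial \<Psi> i j x))" .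
  show ?thesis unfolding generator_def inner_add_right inner_scaleR_right inner_sum_right h[symmetric] by simp
qed

lemma inner_line: "(x + t *\<^sub>R a) \<bullet> (x + t *\<^sub>R a) = x \<bullet> x + 2 * t * (x \<bullet> a) + t^2 * (a \<bullet> a)"
  for x a :: "'a::real_inner"
  by (simp add: inner_add_left inner_add_right inner_commute[of a x] power2_eq_square algebra_simps)

lemma r_line: "((\<lambda>t::real. 1 + c + 2 * t * u + t^2 * w) has_real_derivative (2 * u + 2 * t * w)) (at t)"
  by (auto intro!: derivative_eq_intros)

lemma V_line1:
  fixes x a :: "'a::real_inner"
  shows "((\<lambda>t. (1 + (x + t *\<^sub>R a) \<bullet> (x + t *\<^sub>R a))^(M+2)) has_real_derivative
     (real (M+2) * (1 + (x + t *\<^sub>R a) \<bullet> (x + t *\<^sub>R a))^(M+1) * (2*(x \<bullet> a) + 2*t*(a \<bullet> a)))) (at t)"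
proof -
  have "((\<lambda>t. (1 + x \<bullet> x + 2*t*(x \<bullet> a) + t^2*(a \<bullet> a))^(M+2)) has_real_derivative
     (of_nat (M+2) * ((2*(x \<bullet> a) + 2*t*(a \<bullet> a)) * (1 + x \<bullet> x + 2*t*(x \<bullet> a) + t^2*(a \<bullet> a))^(M+2 - Suc 0)))) (at t)"
    by (rule DERIV_power[OF r_line])
  then show ?thesis unfolding inner_line by (simp add: mult_ac add_ac)
qed

lemma V_line2:
  fixes x a :: "'a::real_inner"
  shows "((\<lambda>t. real (M+2) * (1 + (x + t *\<^sub>R a) \<bullet> (x + t *\<^sub>R a))^(M+1) * (2*(x \<bullet> a) + 2*t*(a \<bullet> a))) has_real_derivative
     (real (M+2) * real (M+1) * (1 + x \<bullet> x)^M * (2*(x \<bullet> a))^2 + real (M+2) * (1 + x \<bullet> x)^(M+1) * (2*(a \<bullet> a)))) (at 0)"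
proof -
  let ?r = "\<lambda>t. 1 + x \<bullet> x + 2*t*(x \<bullet> a) + t^2*(a \<bullet> a)"
  have d1: "((\<lambda>t. (?r t)^(M+1)) has_real_derivative (of_nat (M+1) * ((2*(x \<bullet> a) + 2*0*(a \<bullet> a)) * (?r 0)^(M+1 - Suc 0)))) (at 0)"
    by (rule DERIV_power[OF r_line])
  have d2: "((\<lambda>t::real. 2*(x \<bullet> a) + 2*t*(a \<bullet> a)) has_real_derivative (2*(a \<bullet> a))) (at 0)"
    by (auto intro!: derivative_eq_intros)
  have "((\<lambda>t. real (M+2) * ((?r t)^(M+1) * (2*(x \<bullet> a) + 2*t*(a \<bullet> a)))) has_real_derivative
     (real (M+2) * real (M+1) * (1 + x \<bullet> x)^M * (2*(x \<bullet> a))^2 + real (M+2) * (1 + x \<bullet> x)^(M+1) * (2*(a \<bullet> a)))) (at 0)"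
    by (rule DERIV_cong[OF DERIV_cmult[OF DERIV_mult'[OF d1 d2]]]) (simp add: power2_eq_square algebra_simps)
  then show ?thesis unfolding inner_line by (simp add: mult.assoc add.assoc)
qed

definition colv :: "real^'l^'n \<Rightarrow> 'l \<Rightarrow> real^'n" where "colv A k = (\<chi> i. A$i$k)"
definition Bq :: "nat \<Rightarrow> real^'n \<Rightarrow> real^'n \<Rightarrow> real" where
  "Bq M x a = real (M+2) * real (M+1) * (1 + x \<bullet> x)^M * (2*(x \<bullet> a))^2 + real (M+2) * (1 + x \<bullet> x)^(M+1) * (2*(a \<bullet> a))"
definition LV :: "nat \<Rightarrow> (real^'n \<Rightarrow> real^'l^'n) \<Rightarrow> (real^'n \<Rightarrow> real^'n) \<Rightarrow> real^'n \<Rightarrow> real" where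
  "LV M \<tau> f x = 1/2 * (\<Sum>k\<in>UNIV. Bq M x (colv (\<tau> x) k)) + real (M+2) * (1 + x \<bullet> x)^(M+1) * (2*(x \<bullet> f x))"
definition Vf :: "nat \<Rightarrow> real^'n \<Rightarrow> real" where "Vf M x = (1 + x \<bullet> x)^(M+2)"

lemma colv_diff: "colv A k - colv B k = colv (A - B) k"
  by (simp add: colv_def vec_eq_iff)

lemma colv_norm: "(\<Sum>k\<in>UNIV. (norm (colv A k))^2) = (norm A)^2"
proof -
  have "(\<Sum>k\<in>UNIV. (norm (colv A k))^2) = (\<Sum>k\<in>UNIV. \<Sum>i\<in>UNIV. A$i$k * A$i$k)"
    by (simp add: power2_norm_eq_inner inner_vec_def colv_def)
  also have "\<dots> = (\<Sum>i\<in>UNIV. \<Sum>k\<in>UNIV. A$i$k * A$i$k)" by (rule sum.swap)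
  also have "\<dots> = (norm A)^2"
    by (simp add: power2_norm_eq_inner inner_vec_def)
  finally show ?thesis .
qed

lemma max_point_ineq:
  fixes \<tau> :: "real^'n \<Rightarrow> real^'l^'n" and f :: "real^'n \<Rightarrow> real^'n"
    and \<Psi> b :: "real^'n \<Rightarrow> real^'m" and e :: "real^'m"
  assumes C2: "C2_fun \<Psi>"
    and poisson: "\<And>y. generator \<tau> f \<Psi> y = - b y"
    and blip: "\<And>x y. norm (b x - b y) \<le> Lb * norm (x - y)"
    and tlip: "\<And>x y. norm (\<tau> x - \<tau> y) \<le> D * norm (x - y)"
    and mono: "\<And>x y. (f x - f y) \<bullet> (x - y) \<le> - Cf * (norm (x - y))^2"
    and e: "norm e \<le> 1" and K: "K \<ge> 0" and D: "D \<ge> 0"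
    and mx: "\<And>x y. e \<bullet> (\<Psi> x - \<Psi> y) - K * norm (x - y) - \<delta> * (Vf M x + Vf M y)
               \<le> e \<bullet> (\<Psi> x0 - \<Psi> y0) - K * norm (x0 - y0) - \<delta> * (Vf M x0 + Vf M y0)"
    and ne: "x0 \<noteq> y0"
  shows "K * (Cf - D^2/2) * norm (x0 - y0) - Lb * norm (x0 - y0) \<le> \<delta> * (LV M \<tau> f x0 + LV M \<tau> f y0)"
proof -
  define p where "p = x0 - y0"
  have p: "p \<noteq> 0" using ne by (simp add: p_def)
  have np: "norm p > 0" using p by simp
  have d0: "\<And>z. \<Psi> differentiable (at z)" using C2 unfolding C2_fun_def by auto
  define SP where "SP x a = (\<Sum>i\<in>UNIV. \<Sum>j\<in>UNIV. a$i * a$j * (e \<bullet> second_partial \<Psi> i j x))" for x a :: "real^'n"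
  have col: "SP x0 (colv (\<tau> x0) k) - SP y0 (colv (\<tau> y0) k) - \<delta> * (Bq M x0 (colv (\<tau> x0) k) + Bq M y0 (colv (\<tau> y0) k))
      \<le> K * (norm (colv (\<tau> x0) k - colv (\<tau> y0) k))^2 / norm p" for k
  proof -
    define a where "a = colv (\<tau> x0) k"
    define c where "c = colv (\<tau> y0) k"
    have "SP x0 a - SP y0 c - \<delta> * (Bq M x0 a + Bq M y0 c) \<le> K * (norm (a - c))^2 / norm p"
    proof (rule column_ineq[where Fx = "\<lambda>t. e \<bullet> \<Psi> (x0 + t *\<^sub>R a)" and Fy = "\<lambda>t. e \<bullet> \<Psi> (y0 + t *\<^sub>R c)"
        and Vx = "\<lambda>t. (1 + (x0 + t *\<^sub>R a) \<bullet> (x0 + t *\<^sub>R a))^(M+2)"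
        and Vy = "\<lambda>t. (1 + (y0 + t *\<^sub>R c) \<bullet> (y0 + t *\<^sub>R c))^(M+2)"])
      show "\<And>t. ((\<lambda>t. e \<bullet> \<Psi> (x0 + t *\<^sub>R a)) has_real_derivative (e \<bullet> frechet_derivative \<Psi> (at (x0 + t *\<^sub>R a)) a)) (at t)"
        by (rule line_deriv1[OF d0])
      show "((\<lambda>t. e \<bullet> frechet_derivative \<Psi> (at (x0 + t *\<^sub>R a)) a) has_real_derivative SP x0 a) (at 0)"
        unfolding SP_def by (rule line_deriv2[OF C2])
      show "\<And>t. ((\<lambda>t. e \<bullet> \<Psi> (y0 + t *\<^sub>R c)) has_real_derivative (e \<bullet> frechet_derivative \<Psi> (at (y0 + t *\<^sub>R c)) c)) (at t)"
        by (rule line_deriv1[OF d0])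
      show "((\<lambda>t. e \<bullet> frechet_derivative \<Psi> (at (y0 + t *\<^sub>R c)) c) has_real_derivative SP y0 c) (at 0)"
        unfolding SP_def by (rule line_deriv2[OF C2])
      show "\<And>t. ((\<lambda>t. (1 + (x0 + t *\<^sub>R a) \<bullet> (x0 + t *\<^sub>R a))^(M+2)) has_real_derivative
          (real (M+2) * (1 + (x0 + t *\<^sub>R a) \<bullet> (x0 + t *\<^sub>R a))^(M+1) * (2*(x0 \<bullet> a) + 2*t*(a \<bullet> a)))) (at t)"
        by (rule V_line1)
      show "((\<lambda>t. real (M+2) * (1 + (x0 + t *\<^sub>R a) \<bullet> (x0 + t *\<^sub>R a))^(M+1) * (2*(x0 \<bullet> a) + 2*t*(a \<bullet> a))) has_real_derivative
          Bq M x0 a) (at 0)"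
        unfolding Bq_def by (rule V_line2)
      show "\<And>t. ((\<lambda>t. (1 + (y0 + t *\<^sub>R c) \<bullet> (y0 + t *\<^sub>R c))^(M+2)) has_real_derivative
          (real (M+2) * (1 + (y0 + t *\<^sub>R c) \<bullet> (y0 + t *\<^sub>R c))^(M+1) * (2*(y0 \<bullet> c) + 2*t*(c \<bullet> c)))) (at t)"
        by (rule V_line1)
      show "((\<lambda>t. real (M+2) * (1 + (y0 + t *\<^sub>R c) \<bullet> (y0 + t *\<^sub>R c))^(M+1) * (2*(y0 \<bullet> c) + 2*t*(c \<bullet> c))) has_real_derivative
          Bq M y0 c) (at 0)"
        unfolding Bq_def by (rule V_line2)
      show "p \<noteq> 0" by (rule p)
      show "K \<ge> 0" by (rule K)
      fix t :: real
      have eqp: "(x0 + t *\<^sub>R a) - (y0 + t *\<^sub>R c) = p + t *\<^sub>R (a - c)"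
        by (simp add: p_def algebra_simps)
      have "e \<bullet> (\<Psi> (x0 + t *\<^sub>R a) - \<Psi> (y0 + t *\<^sub>R c)) - K * norm ((x0 + t *\<^sub>R a) - (y0 + t *\<^sub>R c))
          - \<delta> * (Vf M (x0 + t *\<^sub>R a) + Vf M (y0 + t *\<^sub>R c))
          \<le> e \<bullet> (\<Psi> x0 - \<Psi> y0) - K * norm (x0 - y0) - \<delta> * (Vf M x0 + Vf M y0)" by (rule mx)
      then show "e \<bullet> \<Psi> (x0 + t *\<^sub>R a) - e \<bullet> \<Psi> (y0 + t *\<^sub>R c) - K * norm (p + t *\<^sub>R (a - c))
          - \<delta> * ((1 + (x0 + t *\<^sub>R a) \<bullet> (x0 + t *\<^sub>R a))^(M+2) + (1 + (y0 + t *\<^sub>R c) \<bullet> (y0 + t *\<^sub>R c))^(M+2))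
          \<le> e \<bullet> \<Psi> (x0 + 0 *\<^sub>R a) - e \<bullet> \<Psi> (y0 + 0 *\<^sub>R c) - K * norm p
          - \<delta> * ((1 + (x0 + 0 *\<^sub>R a) \<bullet> (x0 + 0 *\<^sub>R a))^(M+2) + (1 + (y0 + 0 *\<^sub>R c) \<bullet> (y0 + 0 *\<^sub>R c))^(M+2))"
        unfolding eqp Vf_def inner_diff_right p_def by simp
    qed
    then show ?thesis unfolding a_def c_def .
  qed
  define u where "u = f x0"
  define v where "v = f y0"
  define Lx where "Lx = e \<bullet> frechet_derivative \<Psi> (at x0) u"
  define Ly where "Ly = e \<bullet> frechet_derivative \<Psi> (at y0) v"
  define Mx where "Mx = real (M+2) * (1 + x0 \<bullet> x0)^(M+1) * (2*(x0 \<bullet> u))"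
  define My where "My = real (M+2) * (1 + y0 \<bullet> y0)^(M+1) * (2*(y0 \<bullet> v))"
  have fo: "Lx - Ly - \<delta> * (Mx + My) \<le> K * (p \<bullet> (u - v)) / norm p"
  proof (rule first_ineq[where Fx = "\<lambda>t. e \<bullet> \<Psi> (x0 + t *\<^sub>R u)" and Fy = "\<lambda>t. e \<bullet> \<Psi> (y0 + t *\<^sub>R v)"
        and Vx = "\<lambda>t. (1 + (x0 + t *\<^sub>R u) \<bullet> (x0 + t *\<^sub>R u))^(M+2)"
        and Vy = "\<lambda>t. (1 + (y0 + t *\<^sub>R v) \<bullet> (y0 + t *\<^sub>R v))^(M+2)"])
    show "((\<lambda>t. e \<bullet> \<Psi> (x0 + t *\<^sub>R u)) has_real_derivative Lx) (at 0)"
      using line_deriv1[OF d0, where e=e and x=x0 and a=u and t=0] unfolding Lx_def by simp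
    show "((\<lambda>t. e \<bullet> \<Psi> (y0 + t *\<^sub>R v)) has_real_derivative Ly) (at 0)"
      using line_deriv1[OF d0, where e=e and x=y0 and a=v and t=0] unfolding Ly_def by simp
    show "((\<lambda>t. (1 + (x0 + t *\<^sub>R u) \<bullet> (x0 + t *\<^sub>R u))^(M+2)) has_real_derivative Mx) (at 0)"
      by (rule DERIV_cong[OF V_line1]) (simp add: Mx_def)
    show "((\<lambda>t. (1 + (y0 + t *\<^sub>R v) \<bullet> (y0 + t *\<^sub>R v))^(M+2)) has_real_derivative My) (at 0)"
      by (rule DERIV_cong[OF V_line1]) (simp add: My_def)
    show "p \<noteq> 0" by (rule p)
    show "K \<ge> 0" by (rule K)
    fix t :: real
    have eqp: "(x0 + t *\<^sub>R u) - (y0 + t *\<^sub>R v) = p + t *\<^sub>R (u - v)"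
      by (simp add: p_def algebra_simps)
    have "e \<bullet> (\<Psi> (x0 + t *\<^sub>R u) - \<Psi> (y0 + t *\<^sub>R v)) - K * norm ((x0 + t *\<^sub>R u) - (y0 + t *\<^sub>R v))
        - \<delta> * (Vf M (x0 + t *\<^sub>R u) + Vf M (y0 + t *\<^sub>R v))
        \<le> e \<bullet> (\<Psi> x0 - \<Psi> y0) - K * norm (x0 - y0) - \<delta> * (Vf M x0 + Vf M y0)" by (rule mx)
    then show "e \<bullet> \<Psi> (x0 + t *\<^sub>R u) - e \<bullet> \<Psi> (y0 + t *\<^sub>R v) - K * norm (p + t *\<^sub>R (u - v))
        - \<delta> * ((1 + (x0 + t *\<^sub>R u) \<bullet> (x0 + t *\<^sub>R u))^(M+2) + (1 + (y0 + t *\<^sub>R v) \<bullet> (y0 + t *\<^sub>R v))^(M+2))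
        \<le> e \<bullet> \<Psi> (x0 + 0 *\<^sub>R u) - e \<bullet> \<Psi> (y0 + 0 *\<^sub>R v) - K * norm p
        - \<delta> * ((1 + (x0 + 0 *\<^sub>R u) \<bullet> (x0 + 0 *\<^sub>R u))^(M+2) + (1 + (y0 + 0 *\<^sub>R v) \<bullet> (y0 + 0 *\<^sub>R v))^(M+2))"
      unfolding eqp Vf_def inner_diff_right p_def by simp
  qed
  have pq: "p \<bullet> (u - v) \<le> - Cf * (norm p)^2"
    using mono[of x0 y0] unfolding u_def v_def p_def by (simp add: inner_commute)
  have fo2: "Lx - Ly - \<delta> * (Mx + My) \<le> - K * Cf * norm p"
  proof -
    have "K * (p \<bullet> (u - v)) \<le> K * (- Cf * (norm p)^2)" by (rule mult_left_mono[OF pq K])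
    then have "K * (p \<bullet> (u - v)) / norm p \<le> K * (- Cf * (norm p)^2) / norm p"
      using np by (rule divide_right_mono[OF _ less_imp_le])
    also have "\<dots> = - K * Cf * norm p" using np by (simp add: power2_eq_square)
    finally show ?thesis using fo by linarith
  qed
  have sumcol: "(\<Sum>k\<in>UNIV. SP x0 (colv (\<tau> x0) k)) - (\<Sum>k\<in>UNIV. SP y0 (colv (\<tau> y0) k))
      - \<delta> * ((\<Sum>k\<in>UNIV. Bq M x0 (colv (\<tau> x0) k)) + (\<Sum>k\<in>UNIV. Bq M y0 (colv (\<tau> y0) k)))
      \<le> K * D^2 * norm p"
  proof -
    have "(\<Sum>k\<in>UNIV. SP x0 (colv (\<tau> x0) k)) - (\<Sum>k\<in>UNIV. SP y0 (colv (\<tau> y0) k))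
      - \<delta> * ((\<Sum>k\<in>UNIV. Bq M x0 (colv (\<tau> x0) k)) + (\<Sum>k\<in>UNIV. Bq M y0 (colv (\<tau> y0) k)))
      = (\<Sum>k\<in>UNIV. SP x0 (colv (\<tau> x0) k) - SP y0 (colv (\<tau> y0) k) - \<delta> * (Bq M x0 (colv (\<tau> x0) k) + Bq M y0 (colv (\<tau> y0) k)))"
      by (simp add: sum_subtractf sum.distrib[symmetric] sum_distrib_left)
    also have "\<dots> \<le> (\<Sum>k\<in>UNIV. K * (norm (colv (\<tau> x0) k - colv (\<tau> y0) k))^2 / norm p)"
      by (rule sum_mono) (rule col)
    also have "\<dots> = K * (norm (\<tau> x0 - \<tau> y0))^2 / norm p"
      by (simp add: colv_diff sum_divide_distrib[symmetric] sum_distrib_left[symmetric] colv_norm)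
    also have "\<dots> \<le> K * (D * norm p)^2 / norm p"
    proof -
      have "(norm (\<tau> x0 - \<tau> y0))^2 \<le> (D * norm p)^2"
        using tlip[of x0 y0] unfolding p_def by (intro power_mono) auto
      then show ?thesis using K np by (intro divide_right_mono mult_left_mono) auto
    qed
    also have "\<dots> = K * D^2 * norm p" using np by (simp add: power2_eq_square)
    finally show ?thesis .
  qed
  have gx: "1/2 * (\<Sum>k\<in>UNIV. SP x0 (colv (\<tau> x0) k)) + Lx = - (e \<bullet> b x0)"
    using gen_expand[of e \<tau> f \<Psi> x0] poisson[of x0]
    by (simp add: SP_def colv_def Lx_def u_def mult.assoc)
  have gy: "1/2 * (\<Sum>k\<in>UNIV. SP y0 (colv (\<tau> y0) k)) + Ly = - (e \<bullet> b y0)"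
    using gen_expand[of e \<tau> f \<Psi> y0] poisson[of y0]
    by (simp add: SP_def colv_def Ly_def v_def mult.assoc)
  have bb: "e \<bullet> b y0 - e \<bullet> b x0 \<ge> - Lb * norm p"
  proof -
    have "\<bar>e \<bullet> (b x0 - b y0)\<bar> \<le> norm e * norm (b x0 - b y0)" by (rule Cauchy_Schwarz_ineq2)
    also have "\<dots> \<le> 1 * norm (b x0 - b y0)" using e by (intro mult_right_mono) auto
    also have "\<dots> \<le> Lb * norm p" using blip[of x0 y0] unfolding p_def by simp
    finally show ?thesis by (simp add: inner_diff_right abs_le_iff)
  qed
  have LVx: "LV M \<tau> f x0 = 1/2 * (\<Sum>k\<in>UNIV. Bq M x0 (colv (\<tau> x0) k)) + Mx"
    unfolding LV_def Mx_def u_def ..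
  have LVy: "LV M \<tau> f y0 = 1/2 * (\<Sum>k\<in>UNIV. Bq M y0 (colv (\<tau> y0) k)) + My"
    unfolding LV_def My_def v_def ..
  show ?thesis
    unfolding LVx LVy p_def[symmetric]
    using sumcol fo2 gx gy bb by (simp add: algebra_simps)
qed

lemma LV_bound:
  fixes \<tau> :: "real^'n \<Rightarrow> real^'l^'n" and f :: "real^'n \<Rightarrow> real^'n"
  assumes T: "\<And>x. norm (\<tau> x) \<le> T"
    and fx: "\<And>x. x \<bullet> f x \<le> - Cf * (norm x)^2 + norm x * F0"
  shows "LV M \<tau> f x \<le> real (M+2) * (1 + (norm x)^2)^(M+1) * (T^2 * (2 * real M + 3) + 2 * F0 * norm x - 2 * Cf * (norm x)^2)"
proof -
  define r where "r = 1 + x \<bullet> x"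
  have r1: "r \<ge> 1" unfolding r_def by simp
  have rn: "r = 1 + (norm x)^2" unfolding r_def by (simp add: power2_norm_eq_inner)
  define S1 where "S1 = (\<Sum>k\<in>UNIV. (x \<bullet> colv (\<tau> x) k)^2)"
  define S2 where "S2 = (\<Sum>k\<in>UNIV. colv (\<tau> x) k \<bullet> colv (\<tau> x) k)"
  have S2n: "S2 = (norm (\<tau> x))^2"
    unfolding S2_def colv_norm[symmetric] by (simp add: power2_norm_eq_inner)
  have T0: "T \<ge> 0" using T[of x] norm_ge_zero[of "\<tau> x"] by linarith
  have S2T: "S2 \<le> T^2" unfolding S2n using T[of x] by (intro power_mono) auto
  have S1b: "S1 \<le> (x \<bullet> x) * S2"
  proof -
    have "(x \<bullet> colv (\<tau> x) k)^2 \<le> (x \<bullet> x) * (colv (\<tau> x) k \<bullet> colv (\<tau> x) k)" for k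
    proof -
      have "\<bar>x \<bullet> colv (\<tau> x) k\<bar> \<le> norm x * norm (colv (\<tau> x) k)" by (rule Cauchy_Schwarz_ineq2)
      then have "\<bar>x \<bullet> colv (\<tau> x) k\<bar>^2 \<le> (norm x * norm (colv (\<tau> x) k))^2" by (intro power_mono) auto
      then show ?thesis by (simp add: power_mult_distrib power2_norm_eq_inner)
    qed
    then have "S1 \<le> (\<Sum>k\<in>UNIV. (x \<bullet> x) * (colv (\<tau> x) k \<bullet> colv (\<tau> x) k))"
      unfolding S1_def by (rule sum_mono)
    then show ?thesis unfolding S2_def by (simp add: sum_distrib_left)
  qed
  have S1T: "S1 \<le> r * T^2"
  proof -
    have "(x \<bullet> x) * S2 \<le> r * T^2"
      using S2T r_def by (intro mult_mono) (auto simp: S2n)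
    then show ?thesis using S1b by linarith
  qed
  have half: "1/2 * (\<Sum>k\<in>UNIV. Bq M x (colv (\<tau> x) k)) = real (M+2) * real (M+1) * r^M * 2 * S1 + real (M+2) * r^(M+1) * S2"
    unfolding Bq_def S1_def S2_def r_def[symmetric]
    by (simp add: sum.distrib sum_distrib_left power_mult_distrib algebra_simps)
  define P where "P = real (M+2) * r^(M+1)"
  have P0: "P \<ge> 0" unfolding P_def using r1 by simp
  have b1: "real (M+2) * real (M+1) * r^M * 2 * S1 \<le> real (M+2) * real (M+1) * r^M * 2 * (r * T^2)"
    using S1T r1 by (intro mult_left_mono) auto
  have b2: "real (M+2) * r^(M+1) * S2 \<le> P * T^2" unfolding P_def
    using S2T r1 by (intro mult_left_mono) auto
  have b1': "real (M+2) * real (M+1) * r^M * 2 * (r * T^2) = P * (T^2 * (2 * real M + 2))"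
    unfolding P_def by (simp add: algebra_simps)
  have b3: "real (M+2) * (1 + x \<bullet> x)^(M+1) * (2*(x \<bullet> f x)) \<le> P * (2 * F0 * norm x - 2 * Cf * (norm x)^2)"
    unfolding P_def r_def[symmetric] using fx[of x] P0 unfolding P_def
    by (intro mult_left_mono) (auto simp: algebra_simps)
  have "LV M \<tau> f x \<le> P * (T^2 * (2 * real M + 2)) + P * T^2 + P * (2 * F0 * norm x - 2 * Cf * (norm x)^2)"
    unfolding LV_def half using b1 b1' b2 b3 by linarith
  also have "\<dots> = P * (T^2 * (2 * real M + 3) + 2 * F0 * norm x - 2 * Cf * (norm x)^2)"
    by (simp add: algebra_simps)
  finally show ?thesis unfolding P_def rn .
qed

lemma G_props:
  fixes c2 c3 c4 :: real and M :: nat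
  assumes c2: "c2 \<ge> 0" and c3: "c3 \<ge> 0" and c4: "c4 > 0"
  defines "G \<equiv> \<lambda>s. real (M+2) * (1 + s^2)^(M+1) * (c2 + c3 * s - c4 * s^2)"
  shows "\<exists>CV R. (\<forall>s\<ge>0. G s \<le> CV) \<and> (\<forall>s\<ge>0. G s \<ge> - CV \<longrightarrow> s \<le> R)"
proof -
  have quad: "c2 + c3 * s - c4 * s^2 \<le> - Z" if "s \<ge> 1" "s \<ge> (c2 + c3 + Z) / c4" "Z \<ge> 0" for s Z
  proof -
    have "c2 + c3 + Z \<le> c4 * s" using that(2) c4 by (simp add: divide_le_eq mult.commute)
    then have "(c2 + c3 + Z) * s \<le> c4 * s * s" using that(1) by (intro mult_right_mono) auto
    moreover have "c2 + c3 * s + Z \<le> (c2 + c3 + Z) * s" using that c2 c3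
    proof -
      have "(c2 + Z) * (s - 1) \<ge> 0" using that c2 by simp
      then show ?thesis by (simp add: algebra_simps)
    qed
    ultimately show ?thesis by (simp add: power2_eq_square)
  qed
  define s1 where "s1 = max 1 ((c2 + c3) / c4)"
  define CV where "CV = real (M+2) * (1 + s1^2)^(M+1) * (c2 + c3 * s1)"
  have s1: "s1 \<ge> 1" unfolding s1_def by simp
  have CV0: "CV \<ge> 0" unfolding CV_def using s1 c2 c3 by simp
  have up: "G s \<le> CV" if s: "s \<ge> 0" for s
  proof (cases "c2 + c3 * s - c4 * s^2 \<le> 0")
    case True
    then have "G s \<le> 0" unfolding G_def by (intro mult_nonneg_nonpos) auto
    then show ?thesis using CV0 by linarith
  next
    case False
    have ss: "s < s1"
    proof (rule ccontr)
      assume "\<not> s < s1"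
      then have "s \<ge> 1" "s \<ge> (c2 + c3 + 0) / c4" using s1 unfolding s1_def by auto
      from quad[OF this] False show False by simp
    qed
    have "G s \<le> real (M+2) * (1 + s1^2)^(M+1) * (c2 + c3 * s - c4 * s^2)"
      unfolding G_def using False ss s
      by (intro mult_right_mono mult_left_mono power_mono) (auto intro!: power_mono)
    also have "\<dots> \<le> CV"
    proof -
      have "c3 * s \<le> c3 * s1" using ss c3 by (intro mult_left_mono) auto
      moreover have "c4 * s^2 \<ge> 0" using c4 by simp
      ultimately have "c2 + c3 * s - c4 * s^2 \<le> c2 + c3 * s1" by linarith
      then show ?thesis unfolding CV_def by (intro mult_left_mono) auto
    qed
    finally show ?thesis .
  qed
  define R where "R = max 1 ((c2 + c3 + (CV + 1)) / c4)"
  have low: "s \<le> R" if s: "s \<ge> 0" and g: "G s \<ge> - CV" for s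
  proof (rule ccontr)
    assume "\<not> s \<le> R"
    then have "s \<ge> 1" "s \<ge> (c2 + c3 + (CV + 1)) / c4" unfolding R_def by auto
    from quad[OF this] CV0 have Q: "c2 + c3 * s - c4 * s^2 \<le> - (CV + 1)" by simp
    have P1: "real (M+2) * (1 + s^2)^(M+1) \<ge> 1"
    proof -
      have "(1::real) \<le> (1 + s^2)^(M+1)" by (rule one_le_power) simp
      moreover have "(1::real) \<le> real (M+2)" by simp
      ultimately show ?thesis by (metis mult_mono' one_le_mult_iff mult_1_left zero_le_one order_trans)
    qed
    have "G s \<le> 1 * (c2 + c3 * s - c4 * s^2)"
      unfolding G_def using Q CV0 P1 by (intro mult_right_mono_neg) auto
    then have "G s + CV + 1 \<le> 0" using Q by simp
    then show False using g by simp
  qed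
  show ?thesis using up low by blast
qed

lemma C1b_deriv_bound:
  fixes g :: "real^'n \<Rightarrow> 'v::real_normed_vector"
  assumes "C1b_fun g"
  shows "onorm (frechet_derivative g (at y)) \<le> sup_deriv_norm g"
    and "(g has_derivative frechet_derivative g (at y)) (at y)"
proof -
  obtain g' where d: "\<And>y. (g has_derivative blinfun_apply (g' y)) (at y)" and bd: "bounded (range g')"
    using assms unfolding C1b_fun_def by blast
  have fe: "frechet_derivative g (at z) = blinfun_apply (g' z)" for z
    using frechet_derivative_at[OF d[of z]] by simp
  obtain B where B: "\<And>z. norm (g' z) \<le> B" using bd unfolding bounded_iff by auto
  have bdd: "bdd_above (range (\<lambda>z. onorm (frechet_derivative g (at z))))"
    using B unfolding fe norm_blinfun.rep_eq[symmetric] by (auto intro!: bdd_aboveI)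
  show "onorm (frechet_derivative g (at y)) \<le> sup_deriv_norm g"
    unfolding sup_deriv_norm_def by (rule cSUP_upper[OF UNIV_I bdd])
  show "(g has_derivative frechet_derivative g (at y)) (at y)" using d[of y] unfolding fe .
qed

lemma C1b_lip:
  fixes g :: "real^'n \<Rightarrow> 'v::real_normed_vector"
  assumes "C1b_fun g"
  shows "norm (g x - g y) \<le> sup_deriv_norm g * norm (x - y)"
proof (rule differentiable_bound[where S = UNIV and f' = "\<lambda>z. frechet_derivative g (at z)"])
  show "convex (UNIV :: (real^'n) set)" by simp
  show "\<And>z. z \<in> UNIV \<Longrightarrow> (g has_derivative frechet_derivative g (at z)) (at z within UNIV)"
    using C1b_deriv_bound(2)[OF assms] by simp
  show "\<And>z. z \<in> UNIV \<Longrightarrow> onorm (frechet_derivative g (at z)) \<le> sup_deriv_norm g"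
    using C1b_deriv_bound(1)[OF assms] by simp
qed auto

lemma C1b_sup_nonneg:
  fixes g :: "real^'n \<Rightarrow> 'v::real_normed_vector"
  assumes "C1b_fun g"
  shows "sup_deriv_norm g \<ge> 0"
proof -
  have "bounded_linear (frechet_derivative g (at 0))"
    using C1b_deriv_bound(2)[OF assms] has_derivative_bounded_linear by blast
  then have "onorm (frechet_derivative g (at 0)) \<ge> 0" by (rule onorm_pos_le)
  then show ?thesis using C1b_deriv_bound(1)[OF assms, of 0] by linarith
qed

lemma bderiv_lip:
  fixes b :: "real^'n \<Rightarrow> 'v::real_normed_vector"
  assumes "\<exists>b'. (\<forall>y. (b has_derivative blinfun_apply (b' y)) (at y)) \<and> continuous_on UNIV b' \<and> bounded (range b')"
  shows "\<exists>Lb\<ge>0. \<forall>x y. norm (b x - b y) \<le> Lb * norm (x - y)"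
proof -
  obtain b' where d: "\<And>y. (b has_derivative blinfun_apply (b' y)) (at y)" and bd: "bounded (range b')"
    using assms by blast
  obtain B where B: "\<And>z. norm (b' z) \<le> B" using bd unfolding bounded_iff by auto
  have B0: "B \<ge> 0" using B[of 0] norm_ge_zero[of "b' 0"] by linarith
  have "norm (b x - b y) \<le> B * norm (x - y)" for x y
  proof (rule differentiable_bound[where S = UNIV and f' = "\<lambda>z. blinfun_apply (b' z)"])
    show "\<And>z. z \<in> UNIV \<Longrightarrow> (b has_derivative blinfun_apply (b' z)) (at z within UNIV)" using d by simp
    show "\<And>z. z \<in> UNIV \<Longrightarrow> onorm (blinfun_apply (b' z)) \<le> B" using B by (simp add: norm_blinfun.rep_eq[symmetric])
  qed auto
  then show ?thesis using B0 by blast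
qed

lemma psi_lip_ball:
  fixes \<Psi> :: "real^'n \<Rightarrow> 'v::real_normed_vector"
  assumes C2: "C2_fun \<Psi>" and R: "R \<ge> 0"
  shows "\<exists>G. \<forall>x\<in>cball 0 R. \<forall>y\<in>cball 0 R. norm (\<Psi> x - \<Psi> y) \<le> G * norm (x - y)"
proof -
  define dj where "dj j z = frechet_derivative \<Psi> (at z) (axis j 1)" for j z
  have d0: "\<And>z. \<Psi> differentiable (at z)" and d1: "\<And>j z. dj j differentiable (at z)"
    using C2 unfolding C2_fun_def dj_def by auto
  have cj: "continuous_on UNIV (dj j)" for j
    by (rule continuous_at_imp_continuous_on) (auto intro: differentiable_imp_continuous_within d1)
  define h where "h z = (\<Sum>j\<in>UNIV. norm (dj j z))" for z
  have ch: "continuous_on (cball 0 R) h" unfolding h_def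
    by (intro continuous_intros continuous_on_subset[OF cj]) auto
  obtain zm where zm: "zm \<in> cball 0 R" "\<And>z. z \<in> cball 0 R \<Longrightarrow> h z \<le> h zm"
    using continuous_attains_sup[OF compact_cball _ ch] R by auto
  have on: "onorm (frechet_derivative \<Psi> (at z)) \<le> h z" for z
  proof (rule onorm_le)
    fix v :: "real^'n"
    have lin: "linear (frechet_derivative \<Psi> (at z))"
      using has_derivative_linear d0 frechet_derivative_works by blast
    have "norm (frechet_derivative \<Psi> (at z) v) = norm (\<Sum>j\<in>UNIV. v$j *\<^sub>R dj j z)"
      by (simp add: lin_expand[OF lin, of v] dj_def)
    also have "\<dots> \<le> (\<Sum>j\<in>UNIV. norm (v$j *\<^sub>R dj j z))" by (rule norm_sum)
    also have "\<dots> \<le> (\<Sum>j\<in>UNIV. norm v * norm (dj j z))"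
      by (rule sum_mono) (auto intro!: mult_right_mono component_le_norm_cart)
    also have "\<dots> = h z * norm v" by (simp add: h_def sum_distrib_left mult.commute)
    finally show "norm (frechet_derivative \<Psi> (at z) v) \<le> h z * norm v" .
  qed
  have "norm (\<Psi> x - \<Psi> y) \<le> h zm * norm (x - y)" if "x \<in> cball 0 R" "y \<in> cball 0 R" for x y
  proof (rule differentiable_bound[where S = "cball 0 R" and f' = "\<lambda>z. frechet_derivative \<Psi> (at z)"])
    show "convex (cball (0::real^'n) R)" by simp
    show "\<And>z. z \<in> cball 0 R \<Longrightarrow> (\<Psi> has_derivative frechet_derivative \<Psi> (at z)) (at z within cball 0 R)"
      using d0 frechet_derivative_works has_derivative_at_withinI by blast
    show "\<And>z. z \<in> cball 0 R \<Longrightarrow> onorm (frechet_derivative \<Psi> (at z)) \<le> h zm"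
      using on zm order_trans by blast
  qed (use that in auto)
  then show ?thesis by blast
qed

lemma max_exists:
  fixes W :: "real^'n \<Rightarrow> real^'n \<Rightarrow> real" and \<phi> :: "real^'n \<Rightarrow> real"
  assumes contW: "continuous_on UNIV (\<lambda>z. W (fst z) (snd z))"
    and bound: "\<And>x y. W x y \<le> \<phi> x + \<phi> y"
    and A: "\<And>x. \<phi> x \<le> A"
    and coer: "\<And>Z. Z \<ge> 0 \<Longrightarrow> \<exists>R. \<forall>x. norm x \<ge> R \<longrightarrow> \<phi> x \<le> - Z"
  shows "\<exists>x0 y0. \<forall>x y. W x y \<le> W x0 y0"
proof -
  define Z where "Z = max 0 (A - W 0 0 + 1)"
  obtain R where R: "\<And>x. norm x \<ge> R \<Longrightarrow> \<phi> x \<le> - Z" using coer[of Z] unfolding Z_def by auto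
  define R' where "R' = max R 0"
  define S where "S = cball (0::real^'n) R' \<times> cball (0::real^'n) R'"
  have cS: "compact S" unfolding S_def by (intro compact_Times compact_cball)
  have z0: "(0, 0) \<in> S" unfolding S_def R'_def by auto
  obtain z where z: "z \<in> S" "\<And>y. y \<in> S \<Longrightarrow> W (fst y) (snd y) \<le> W (fst z) (snd z)"
    using continuous_attains_sup[OF cS _ continuous_on_subset[OF contW]] z0 by blast
  have "W x y \<le> W (fst z) (snd z)" for x y
  proof (cases "(x, y) \<in> S")
    case True then show ?thesis using z(2)[of "(x,y)"] by simp
  next
    case False
    then have "norm x > R' \<or> norm y > R'" unfolding S_def by (auto simp: dist_norm)
    then have "\<phi> x \<le> - Z \<or> \<phi> y \<le> - Z" using R unfolding R'_def by force
    then have "W x y \<le> W 0 0 - 1" using bound[of x y] A[of x] A[of y] unfolding Z_def by auto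
    also have "\<dots> < W (fst z) (snd z)" using z(2)[OF z0] by simp
    finally show ?thesis by simp
  qed
  then show ?thesis by blast
qed

lemma scaleR_mat_vec: "(c *\<^sub>R A) *v x = c *\<^sub>R (A *v x)"
  for A :: "real^'n^'m"
  by (simp add: matrix_vector_mult_def vec_eq_iff sum_distrib_left mult.assoc)

lemma phi_coer:
  fixes \<Psi> :: "real^'n \<Rightarrow> 'v::real_normed_vector"
  assumes growth: "\<And>y. norm (\<Psi> y) \<le> C * (1 + norm y) ^ M" and \<delta>: "\<delta> > 0" and Z: "Z \<ge> 0"
  shows "\<exists>R. \<forall>x. norm x \<ge> R \<longrightarrow> norm (\<Psi> x) - \<delta> * Vf M x \<le> - Z"
proof -
  define R where "R = (C * 2^M + Z) / \<delta>"
  have "norm (\<Psi> x) - \<delta> * Vf M x \<le> - Z" if x: "norm x \<ge> R" for x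
  proof -
    define s where "s = norm x"
    define r where "r = 1 + s^2"
    have s0: "s \<ge> 0" unfolding s_def by simp
    have r1: "r \<ge> 1" unfolding r_def by simp
    have rs: "r \<ge> s"
    proof -
      have "0 \<le> (s - 1)^2" by simp
      then have "s * 2 \<le> 1 + s * s" by (simp add: power2_eq_square algebra_simps)
      then show ?thesis unfolding r_def using s0 by (simp add: power2_eq_square)
    qed
    have Vr: "Vf M x = r^M * r^2"
      unfolding Vf_def r_def s_def by (simp add: power2_norm_eq_inner power_add[symmetric])
    have g1: "1 + s \<le> 2 * r"
    proof -
      have "0 \<le> (s - 1)^2" by simp
      then have "s * 2 \<le> 1 + s * s" by (simp add: power2_eq_square algebra_simps)
      moreover have "s * s \<ge> 0" using s0 by simp
      ultimately have "1 + s \<le> 2 + 2 * (s * s)" using s0 by linarith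
      then show ?thesis unfolding r_def by (simp add: power2_eq_square)
    qed
    have "(1 + s)^M \<le> (2 * r)^M" using g1 s0 by (intro power_mono) auto
    have nb: "norm (\<Psi> x) \<le> C * 2^M * r^M"
    proof (cases "C \<ge> 0")
      case True
      have "(1 + s)^M \<le> (2 * r)^M" using g1 s0 by (intro power_mono) auto
      then have "C * (1 + s)^M \<le> C * (2 * r)^M" using True by (rule mult_left_mono)
      then show ?thesis using growth[of x] unfolding s_def by (simp add: power_mult_distrib mult.assoc)
    next
      case False
      have "(1 + s)^M > 0" using s0 by simp
      then have "C * (1 + s)^M < 0" using False by (simp add: mult_neg_pos)
      then have False using growth[of x] norm_ge_zero[of "\<Psi> x"] unfolding s_def by linarith
      then show ?thesis ..
    qed
    have r2: "\<delta> * r^2 \<ge> C * 2^M + Z"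
    proof -
      have "r^2 \<ge> s" using r1 rs by (simp add: power2_eq_square) (metis mult_mono' mult_1_left order_trans s0 zero_le_one)
      then have "\<delta> * r^2 \<ge> \<delta> * s" using \<delta> by simp
      moreover have "\<delta> * s \<ge> \<delta> * R" using x \<delta> unfolding s_def by simp
      moreover have "\<delta> * R = C * 2^M + Z" unfolding R_def using \<delta> by simp
      ultimately show ?thesis by linarith
    qed
    have "norm (\<Psi> x) - \<delta> * Vf M x \<le> r^M * (C * 2^M - \<delta> * r^2)"
      using nb unfolding Vr by (simp add: algebra_simps)
    also have "\<dots> \<le> r^M * (- Z)" using r2 r1 by (intro mult_left_mono) auto
    also have "\<dots> \<le> - Z"
    proof -
      have "1 \<le> r^M" using r1 by (rule one_le_power)
      then show ?thesis using Z by (simp add: mult_le_cancel_right1)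
    qed
    finally show ?thesis .
  qed
  then show ?thesis by blast
qed

lemma coer_bdd:
  fixes \<phi> :: "real^'n \<Rightarrow> real"
  assumes c: "continuous_on UNIV \<phi>" and coer: "\<exists>R. \<forall>x. norm x \<ge> R \<longrightarrow> \<phi> x \<le> 0"
  shows "\<exists>A. \<forall>x. \<phi> x \<le> A"
proof -
  obtain R where R: "\<And>x. norm x \<ge> R \<Longrightarrow> \<phi> x \<le> 0" using coer by blast
  define R' where "R' = max R 0"
  obtain xm where xm: "xm \<in> cball 0 R'" "\<And>x. x \<in> cball 0 R' \<Longrightarrow> \<phi> x \<le> \<phi> xm"
    using continuous_attains_sup[OF compact_cball _ continuous_on_subset[OF c]] unfolding R'_def
    by (metis UNIV_I centre_in_cball empty_iff max.cobounded2 subsetI)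
  have "\<phi> x \<le> max 0 (\<phi> xm)" for x
  proof (cases "x \<in> cball 0 R'")
    case True then show ?thesis using xm(2)[OF True] by (simp add: le_max_iff_disj)
  next
    case False then have "norm x \<ge> R" unfolding R'_def by (auto simp: dist_norm)
    then have "\<phi> x \<le> 0" using R by blast
    then show ?thesis by (simp add: le_max_iff_disj)
  qed
  then show ?thesis by blast
qed

lemma le_by_eps:
  fixes a b c :: real
  assumes h: "\<And>\<delta>. \<delta> > 0 \<Longrightarrow> a \<le> b + \<delta> * c" and c: "c \<ge> 0"
  shows "a \<le> b"
proof (rule field_le_epsilon)
  fix \<epsilon> :: real assume e: "\<epsilon> > 0"
  have "a \<le> b + (\<epsilon> / (c + 1)) * c" using h[of "\<epsilon> / (c + 1)"] e c by simp
  also have "(\<epsilon> / (c + 1)) * c \<le> \<epsilon>"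
  proof -
    have "\<epsilon> * c \<le> \<epsilon> * (c + 1)" using e by simp
    then show ?thesis using c by (simp add: divide_le_eq pos_divide_le_eq mult.commute)
  qed
  finally show "a \<le> b + \<epsilon>" by simp
qed

theorem mainTheorem15:
  fixes \<tau> :: "real^'n \<Rightarrow> real^'l^'n"
    and \<Gamma> :: "real^'n^'n"
    and \<zeta> :: "real^'n \<Rightarrow> real^'n"
    and f :: "real^'n \<Rightarrow> real^'n"
    and b \<Psi> :: "real^'n \<Rightarrow> real^'m"
    and \<mu> :: "(real^'n) measure"
    and C_f :: real
  assumes tau_C1b: "C1b_fun \<tau>"
    and tau_nondeg: "\<exists>c>0. \<forall>y \<xi>. \<xi> \<bullet> ((\<tau> y ** transpose (\<tau> y)) *v \<xi>) \<ge> c * (norm \<xi>)\<^sup>2"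
    and f_def: "\<And>y. f y = - (\<Gamma> *v y) + \<zeta> y"
    and Gamma_sym: "transpose \<Gamma> = \<Gamma>"
    and Gamma_pd: "\<And>y. y \<noteq> 0 \<Longrightarrow> y \<bullet> (\<Gamma> *v y) > 0"
    and zeta_C1b: "C1b_fun \<zeta>"
    and Cf_pos: "C_f > 0"
    and Cf_ineq: "\<And>y. ((\<Gamma> - sup_deriv_norm \<zeta> *\<^sub>R mat 1) *v y) \<bullet> y \<ge> C_f * (norm y)\<^sup>2"
    and mu_inv: "invariant_measure \<tau> f \<mu>"
    and b_diff: "\<exists>b'. (\<forall>y. (b has_derivative blinfun_apply (b' y)) (at y)) \<and>
                       continuous_on UNIV b' \<and> bounded (range b')"
    and b_int: "integrable \<mu> b"
    and b_centered: "(\<integral>y. b y \<partial>\<mu>) = 0"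
    and Psi_C2: "C2_fun \<Psi>"
    and Psi_poisson: "\<And>y. generator \<tau> f \<Psi> y = - b y"
    and Psi_int: "integrable \<mu> \<Psi>"
    and Psi_centered: "(\<integral>y. \<Psi> y \<partial>\<mu>) = 0"
    and Psi_polygrowth: "\<exists>C (k::nat). \<forall>y. norm (\<Psi> y) \<le> C * (1 + norm y) ^ k"
    and small_noise: "(sup_deriv_norm \<tau>)\<^sup>2 <
        C_f / (BDG_C2 * (4 * max ((sup_deriv_norm f)\<^sup>2 / C_f\<^sup>2) 1))"
  shows "\<exists>B. \<forall>y. onorm (frechet_derivative \<Psi> (at y)) \<le> B"
proof -
  obtain C k where growth: "\<And>y. norm (\<Psi> y) \<le> C * (1 + norm y) ^ k" using Psi_polygrowth by blast
  define M where "M = k"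
  have growthM: "\<And>y. norm (\<Psi> y) \<le> C * (1 + norm y) ^ M" unfolding M_def by (rule growth)
  have d0: "\<And>z. \<Psi> differentiable (at z)" using Psi_C2 unfolding C2_fun_def by auto
  have cPsi: "continuous_on UNIV \<Psi>"
    by (rule continuous_at_imp_continuous_on) (auto intro: differentiable_imp_continuous_within d0)
  define D where "D = sup_deriv_norm \<tau>"
  have D0: "D \<ge> 0" unfolding D_def by (rule C1b_sup_nonneg[OF tau_C1b])
  have tlip: "\<And>x y. norm (\<tau> x - \<tau> y) \<le> D * norm (x - y)" unfolding D_def by (rule C1b_lip[OF tau_C1b])
  have zlip: "\<And>x y. norm (\<zeta> x - \<zeta> y) \<le> sup_deriv_norm \<zeta> * norm (x - y)" by (rule C1b_lip[OF zeta_C1b])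
  obtain Lb where Lb0: "Lb \<ge> 0" and blip: "\<And>x y. norm (b x - b y) \<le> Lb * norm (x - y)"
    using bderiv_lip[OF b_diff] by blast
  obtain T where T: "\<And>x. norm (\<tau> x) \<le> T"
    using tau_C1b unfolding C1b_fun_def bounded_iff by auto
  have mono: "\<And>x y. (f x - f y) \<bullet> (x - y) \<le> - C_f * (norm (x - y))^2"
  proof -
    fix x y :: "real^'n"
    define z where "z = x - y"
    define Lz where "Lz = sup_deriv_norm \<zeta>"
    have fe: "f x - f y = - (\<Gamma> *v z) + (\<zeta> x - \<zeta> y)"
      unfolding f_def z_def by (simp add: matrix_vector_mult_diff_distrib algebra_simps)
    have ci: "(\<Gamma> *v z) \<bullet> z - Lz * (z \<bullet> z) \<ge> C_f * (norm z)^2"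
      using Cf_ineq[of z] unfolding Lz_def
      by (simp add: matrix_vector_mult_diff_rdistrib scaleR_mat_vec matrix_vector_mul_lid inner_diff_left)
    have zz: "(\<zeta> x - \<zeta> y) \<bullet> z \<le> Lz * (z \<bullet> z)"
    proof -
      have "(\<zeta> x - \<zeta> y) \<bullet> z \<le> norm (\<zeta> x - \<zeta> y) * norm z" by (rule norm_cauchy_schwarz)
      also have "\<dots> \<le> (Lz * norm z) * norm z"
        using zlip[of x y] unfolding Lz_def z_def by (intro mult_right_mono) auto
      also have "\<dots> = Lz * (z \<bullet> z)" by (simp add: power2_norm_eq_inner[symmetric] power2_eq_square)
      finally show ?thesis .
    qed
    have "(f x - f y) \<bullet> z = - ((\<Gamma> *v z) \<bullet> z) + (\<zeta> x - \<zeta> y) \<bullet> z"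
      unfolding fe by (simp add: inner_add_left inner_diff_left)
    also have "\<dots> \<le> - C_f * (norm z)^2" using ci zz by linarith
    finally show "(f x - f y) \<bullet> (x - y) \<le> - C_f * (norm (x - y))^2" unfolding z_def .
  qed
  have fx: "\<And>x. x \<bullet> f x \<le> - C_f * (norm x)^2 + norm x * norm (f 0)"
  proof -
    fix x :: "real^'n"
    have "x \<bullet> f x = (f x - f 0) \<bullet> (x - 0) + f 0 \<bullet> x" by (simp add: inner_diff_left inner_diff_right inner_commute)
    also have "\<dots> \<le> - C_f * (norm (x - 0))^2 + norm (f 0) * norm x"
      using mono[of x 0] norm_cauchy_schwarz[of "f 0" x] by linarith
    finally show "x \<bullet> f x \<le> - C_f * (norm x)^2 + norm x * norm (f 0)" by (simp add: mult.commute)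
  qed
  have cpos: "C_f - D^2/2 > 0"
  proof -
    have m1: "max ((sup_deriv_norm f)\<^sup>2 / C_f\<^sup>2) 1 \<ge> 1" by simp
    have "C_f / (BDG_C2 * (4 * max ((sup_deriv_norm f)\<^sup>2 / C_f\<^sup>2) 1)) \<le> C_f / 16"
      unfolding BDG_C2_def using m1 Cf_pos by (intro divide_left_mono) auto
    then have "D^2 < C_f / 16" using small_noise unfolding D_def by linarith
    then show ?thesis using Cf_pos by linarith
  qed
  define c where "c = C_f - D^2/2"
  have c: "c > 0" unfolding c_def using cpos .
  define c2 where "c2 = T^2 * (2 * real M + 3)"
  define c3 where "c3 = 2 * norm (f 0)"
  define c4 where "c4 = 2 * C_f"
  obtain CV R where GCV: "\<And>s. s \<ge> 0 \<Longrightarrow> real (M+2) * (1 + s^2)^(M+1) * (c2 + c3 * s - c4 * s^2) \<le> CV"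
    and GR: "\<And>s. s \<ge> 0 \<Longrightarrow> real (M+2) * (1 + s^2)^(M+1) * (c2 + c3 * s - c4 * s^2) \<ge> - CV \<Longrightarrow> s \<le> R"
    using G_props[of c2 c3 c4 M] unfolding c2_def c3_def c4_def using Cf_pos by auto
  have LVb: "\<And>x. LV M \<tau> f x \<le> real (M+2) * (1 + (norm x)^2)^(M+1) * (c2 + c3 * norm x - c4 * (norm x)^2)"
    unfolding c2_def c3_def c4_def by (rule LV_bound[OF T fx])
  define R' where "R' = max R 0"
  obtain GL where GL: "\<And>x y. x \<in> cball 0 R' \<Longrightarrow> y \<in> cball 0 R' \<Longrightarrow> norm (\<Psi> x - \<Psi> y) \<le> GL * norm (x - y)"
  proof -
    have "R' \<ge> 0" unfolding R'_def by simp
    from psi_lip_ball[OF Psi_C2 this] show ?thesis using that by blast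
  qed
  define K where "K = max (Lb / c) (max GL 0)"
  have K0: "K \<ge> 0" unfolding K_def by simp
  have KGL: "K \<ge> GL" unfolding K_def by simp
  have Kc: "K * c \<ge> Lb"
  proof -
    have "Lb / c \<le> K" unfolding K_def by simp
    then show ?thesis using c by (simp add: divide_le_eq)
  qed
  have key: "e \<bullet> (\<Psi> x - \<Psi> y) \<le> K * norm (x - y)" if e: "norm e \<le> 1" for e x y
  proof (rule le_by_eps)
    show "Vf M x + Vf M y \<ge> 0" unfolding Vf_def by simp
    fix \<delta> :: real assume \<delta>: "\<delta> > 0"
    define W where "W a b = e \<bullet> (\<Psi> a - \<Psi> b) - K * norm (a - b) - \<delta> * (Vf M a + Vf M b)" for a b
    define \<phi> where "\<phi> a = norm (\<Psi> a) - \<delta> * Vf M a" for a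
    have cV: "continuous_on UNIV (\<lambda>z::real^'n. Vf M z)" unfolding Vf_def by (intro continuous_intros)
    have c1: "continuous_on UNIV (\<lambda>z::(real^'n) \<times> (real^'n). \<Psi> (fst z))"
      by (rule continuous_on_compose2[OF cPsi]) (auto intro: continuous_intros)
    have c2': "continuous_on UNIV (\<lambda>z::(real^'n) \<times> (real^'n). \<Psi> (snd z))"
      by (rule continuous_on_compose2[OF cPsi]) (auto intro: continuous_intros)
    have c3': "continuous_on UNIV (\<lambda>z::(real^'n) \<times> (real^'n). Vf M (fst z))"
      by (rule continuous_on_compose2[OF cV]) (auto intro: continuous_intros)
    have c4': "continuous_on UNIV (\<lambda>z::(real^'n) \<times> (real^'n). Vf M (snd z))"
      by (rule continuous_on_compose2[OF cV]) (auto intro: continuous_intros)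
    have contW: "continuous_on UNIV (\<lambda>z. W (fst z) (snd z))"
      unfolding W_def by (intro continuous_intros c1 c2' c3' c4')
    have cphi: "continuous_on UNIV \<phi>" unfolding \<phi>_def by (intro continuous_intros cPsi cV)
    have bound: "W a b \<le> \<phi> a + \<phi> b" for a b
    proof -
      have "e \<bullet> (\<Psi> a - \<Psi> b) \<le> norm e * norm (\<Psi> a - \<Psi> b)" by (rule norm_cauchy_schwarz)
      also have "\<dots> \<le> 1 * norm (\<Psi> a - \<Psi> b)" using e by (intro mult_right_mono) auto
      also have "\<dots> \<le> norm (\<Psi> a) + norm (\<Psi> b)" using norm_triangle_ineq4 by simp
      finally have i1: "e \<bullet> (\<Psi> a - \<Psi> b) \<le> norm (\<Psi> a) + norm (\<Psi> b)" .
      have k: "0 \<le> K * norm (a - b)" using K0 by simp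
      have dd: "\<delta> * (Vf M a + Vf M b) = \<delta> * Vf M a + \<delta> * Vf M b" by (simp add: distrib_left)
      show ?thesis unfolding W_def \<phi>_def dd using i1 k by linarith
    qed
    have coer: "\<And>Z. Z \<ge> 0 \<Longrightarrow> \<exists>R. \<forall>x. norm x \<ge> R \<longrightarrow> \<phi> x \<le> - Z"
      unfolding \<phi>_def by (rule phi_coer[OF growthM \<delta>])
    obtain A where A: "\<And>x. \<phi> x \<le> A" using coer_bdd[OF cphi] coer[of 0] by auto
    obtain x0 y0 where mx: "\<And>a b. W a b \<le> W x0 y0"
      using max_exists[OF contW bound A coer] by blast
    have W0: "W x0 y0 \<le> 0"
    proof (cases "x0 = y0")
      case True
      then show ?thesis unfolding W_def Vf_def using \<delta> by simp
    next
      case False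
      have ineq: "K * (C_f - D^2/2) * norm (x0 - y0) - Lb * norm (x0 - y0) \<le> \<delta> * (LV M \<tau> f x0 + LV M \<tau> f y0)"
        by (rule max_point_ineq[OF Psi_C2 Psi_poisson blip tlip mono e K0 D0 _ False])
          (use mx in \<open>simp add: W_def\<close>)
      have "K * (C_f - D^2/2) * norm (x0 - y0) - Lb * norm (x0 - y0) \<ge> 0"
      proof -
        have "(K * c - Lb) * norm (x0 - y0) \<ge> 0" using Kc by simp
        moreover have "K * (C_f - D^2/2) * norm (x0 - y0) - Lb * norm (x0 - y0) = (K * c - Lb) * norm (x0 - y0)"
          unfolding c_def by (simp add: left_diff_distrib)
        ultimately show ?thesis by simp
      qed
      then have "\<delta> * (LV M \<tau> f x0 + LV M \<tau> f y0) \<ge> 0" using ineq by linarith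
      then have LVpos: "LV M \<tau> f x0 + LV M \<tau> f y0 \<ge> 0" using \<delta> by (simp add: zero_le_mult_iff)
      have gx: "real (M+2) * (1 + (norm x0)^2)^(M+1) * (c2 + c3 * norm x0 - c4 * (norm x0)^2) \<ge> - CV"
        using LVpos LVb[of x0] LVb[of y0] GCV[of "norm y0"] norm_ge_zero[of y0] by linarith
      have gy: "real (M+2) * (1 + (norm y0)^2)^(M+1) * (c2 + c3 * norm y0 - c4 * (norm y0)^2) \<ge> - CV"
        using LVpos LVb[of x0] LVb[of y0] GCV[of "norm x0"] norm_ge_zero[of x0] by linarith
      have x0R: "x0 \<in> cball 0 R'" using GR[OF norm_ge_zero gx] unfolding R'_def by (simp add: dist_norm)
      have y0R: "y0 \<in> cball 0 R'" using GR[OF norm_ge_zero gy] unfolding R'_def by (simp add: dist_norm)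
      have "e \<bullet> (\<Psi> x0 - \<Psi> y0) \<le> norm e * norm (\<Psi> x0 - \<Psi> y0)" by (rule norm_cauchy_schwarz)
      also have "\<dots> \<le> 1 * norm (\<Psi> x0 - \<Psi> y0)" using e by (intro mult_right_mono) auto
      also have "\<dots> \<le> GL * norm (x0 - y0)" using GL[OF x0R y0R] by simp
      also have "\<dots> \<le> K * norm (x0 - y0)" using KGL by (intro mult_right_mono) auto
      finally have "e \<bullet> (\<Psi> x0 - \<Psi> y0) \<le> K * norm (x0 - y0)" .
      moreover have "\<delta> * (Vf M x0 + Vf M y0) \<ge> 0" using \<delta> unfolding Vf_def by simp
      ultimately show ?thesis unfolding W_def by linarith
    qed
    have "W x y \<le> 0" using mx[of x y] W0 by linarith
    then show "e \<bullet> (\<Psi> x - \<Psi> y) \<le> K * norm (x - y) + \<delta> * (Vf M x + Vf M y)" unfolding W_def by linarith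
  qed
  have "onorm (frechet_derivative \<Psi> (at y)) \<le> K" for y
  proof (rule onorm_le)
    fix v :: "real^'n"
    define w where "w = frechet_derivative \<Psi> (at y) v"
    have dirb: "e \<bullet> w \<le> K * norm v" if e: "norm e \<le> 1" for e
    proof -
      have dd: "((\<lambda>t. e \<bullet> \<Psi> (y + t *\<^sub>R v)) has_real_derivative e \<bullet> w) (at 0)"
        using line_deriv1[OF d0, where e=e and x=y and a=v and t=0] unfolding w_def by simp
      then have lim: "((\<lambda>h. (e \<bullet> \<Psi> (y + h *\<^sub>R v) - e \<bullet> \<Psi> (y + 0 *\<^sub>R v)) / h) \<longlongrightarrow> e \<bullet> w) (at 0)"
        unfolding DERIV_def by simp
      have ev: "\<forall>\<^sub>F h in at 0. (e \<bullet> \<Psi> (y + h *\<^sub>R v) - e \<bullet> \<Psi> (y + 0 *\<^sub>R v)) / h \<le> K * norm v"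
        unfolding eventually_at_filter
      proof (intro always_eventually allI impI)
        fix h :: real assume h: "h \<noteq> 0"
        show "(e \<bullet> \<Psi> (y + h *\<^sub>R v) - e \<bullet> \<Psi> (y + 0 *\<^sub>R v)) / h \<le> K * norm v"
        proof (cases "h > 0")
          case True
          have "e \<bullet> (\<Psi> (y + h *\<^sub>R v) - \<Psi> y) \<le> K * norm ((y + h *\<^sub>R v) - y)" by (rule key[OF e])
          then have "e \<bullet> \<Psi> (y + h *\<^sub>R v) - e \<bullet> \<Psi> y \<le> h * (K * norm v)"
            using True by (simp add: inner_diff_right mult_ac)
          then show ?thesis using True by (simp add: pos_divide_le_eq mult.commute)
        next
          case False
          then have hn: "h < 0" using h by simp
          have "e \<bullet> (\<Psi> y - \<Psi> (y + h *\<^sub>R v)) \<le> K * norm (y - (y + h *\<^sub>R v))" by (rule key[OF e])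
          then have "e \<bullet> \<Psi> y - e \<bullet> \<Psi> (y + h *\<^sub>R v) \<le> (- h) * (K * norm v)"
            using hn by (simp add: inner_diff_right mult_ac)
          then show ?thesis using hn by (simp add: neg_divide_le_eq mult.commute)
        qed
      qed
      show ?thesis by (rule tendsto_upperbound[OF lim ev]) simp
    qed
    show "norm (frechet_derivative \<Psi> (at y) v) \<le> K * norm v"
    proof (cases "w = 0")
      case True then show ?thesis using K0 unfolding w_def by simp
    next
      case False
      have "(w /\<^sub>R norm w) \<bullet> w \<le> K * norm v" by (rule dirb) (simp add: False)
      moreover have "(w /\<^sub>R norm w) \<bullet> w = norm w"
        using False by (simp add: power2_norm_eq_inner[symmetric] power2_eq_square)
      ultimately show ?thesis unfolding w_def by simp
    qed
  qed
  then show ?thesis by blast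
qed

end
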